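(* Let $\mathcal{X}=\mathbb{N}$, $\mathcal{Y}=\{0,1\}\times\{0,1\}^*$, and for $d\in\mathbb{N}$ and $A,B\in\{0,1\}^d$ let $h_{A,B}(x)=(0,A)$ if $(A\oplus B)(x\bmod d)=0$ and $h_{A,B}(x)=(1,B)$ if $(A\oplus B)(x\bmod d)=1$. Let $\mathcal{H}_{\mathrm{OTP}}=\{h_{A,B}: A,B\in\{0,1\}^*, |A|=|B|, A\oplus B\text{ balanced}\}$. Then every $h\in\mathcal{H}_{\mathrm{OTP}}$ satisfies $|\mathrm{im}(h)|\le 2$, and the map $h\mapsto\mathrm{im}(h)$ is injective on $\mathcal{H}_{\mathrm{OTP}}$.
   Context: $\{0,1\}^*$ denotes finite binary strings; $\oplus$ is entrywise XOR; positions of a length-$d$ string are indexed by residues modulo $d$; a string is balanced if it has equally many 0s and 1s. $\mathrm{im}(h)=\{h(x):x\in\mathcal{X}\}$. *)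

theory Defs
  imports Main
begin

text \<open>Binary strings are modelled as bool lists (False = 0, True = 1).\<close>

definition xor_str :: "bool list \<Rightarrow> bool list \<Rightarrow> bool list" where
  "xor_str A B = map2 (\<noteq>) A B"

definition balanced :: "bool list \<Rightarrow> bool" where
  "balanced s \<longleftrightarrow> length (filter (\<lambda>b. b) s) = length (filter (\<lambda>b. \<not> b) s)"

definition h_AB :: "bool list \<Rightarrow> bool list \<Rightarrow> nat \<Rightarrow> bool \<times> bool list" where
  "h_AB A B x = (if xor_str A B ! (x mod length A) then (True, B) else (False, A))"

definition H_OTP :: "(nat \<Rightarrow> bool \<times> bool list) set" where
  "H_OTP = {h_AB A B | A B. length A = length B \<and> balanced (xor_str A B)}"

end

theory Submission
  imports Defs
begin
lemma xor_len: "length A = length B \<Longrightarrow> length (xor_str A B) = length A"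
  by (simp add: xor_str_def)

lemma both_vals:
  assumes "balanced s" "s \<noteq> []"
  shows "\<exists>i<length s. s ! i" "\<exists>i<length s. \<not> s ! i"
proof -
  have L: "length (filter (\<lambda>b. b) s) + length (filter (\<lambda>b. \<not> b) s) = length s"
    by (rule sum_length_filter_compl)
  have "length (filter (\<lambda>b. b) s) \<noteq> 0" using assms L unfolding balanced_def by auto
  then have "True \<in> set s" by (auto simp: filter_empty_conv)
  then show "\<exists>i<length s. s ! i" by (auto simp: in_set_conv_nth)
  have "length (filter (\<lambda>b. \<not> b) s) \<noteq> 0" using assms L unfolding balanced_def by auto
  then have "False \<in> set s" by (auto simp: filter_empty_conv)
  then show "\<exists>i<length s. \<not> s ! i" by (auto simp: in_set_conv_nth)
qed

lemma range_ne:
  assumes "length A = length B" "balanced (xor_str A B)" "A \<noteq> []"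
  shows "range (h_AB A B) = {(True, B), (False, A)}"
proof -
  have ne: "xor_str A B \<noteq> []" using assms xor_len by fastforce
  obtain i where i: "i < length A" "xor_str A B ! i"
    using both_vals(1)[OF assms(2) ne] xor_len[OF assms(1)] by auto
  obtain j where j: "j < length A" "\<not> xor_str A B ! j"
    using both_vals(2)[OF assms(2) ne] xor_len[OF assms(1)] by auto
  have a: "h_AB A B i = (True, B)" using i by (simp add: h_AB_def)
  have b: "h_AB A B j = (False, A)" using j by (simp add: h_AB_def)
  have c: "range (h_AB A B) \<subseteq> {(True, B), (False, A)}" by (auto simp: h_AB_def)
  have "{(True, B), (False, A)} \<subseteq> range (h_AB A B)" using a b by (metis empty_subsetI insert_subset rangeI)
  then show ?thesis using c by blast
qed

lemma range_e: "range (h_AB [] []) \<subseteq> {(True, []), (False, [])}"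
  by (auto simp: h_AB_def)
theorem lemma1:
  shows "(\<forall>h\<in>H_OTP. finite (range h) \<and> card (range h) \<le> 2) \<and> inj_on (\<lambda>h. range h) H_OTP"
proof
  show "\<forall>h\<in>H_OTP. finite (range h) \<and> card (range h) \<le> 2"
  proof
    fix h assume "h \<in> H_OTP"
    then obtain A B where h: "h = h_AB A B" "length A = length B" "balanced (xor_str A B)"
      unfolding H_OTP_def by auto
    show "finite (range h) \<and> card (range h) \<le> 2"
    proof (cases "A = []")
      case True
      then have "B = []" using h by simp
      then have S: "range h \<subseteq> {(True, []), (False, [])}" using range_e h True by simp
      then have "finite (range h)" using finite_subset by blast
      moreover have "card (range h) \<le> card {(True, []::bool list), (False, [])}"
        using S by (intro card_mono) auto
      ultimately show ?thesis by simp
    next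
      case False
      then show ?thesis using range_ne[OF h(2,3) False] h(1) by (simp add: card_insert_if)
    qed
  qed
  show "inj_on (\<lambda>h. range h) H_OTP"
  proof (rule inj_onI)
    fix h1 h2 assume "h1 \<in> H_OTP" "h2 \<in> H_OTP" and eq: "range h1 = range h2"
    then obtain A B A' B' where h1: "h1 = h_AB A B" "length A = length B" "balanced (xor_str A B)"
      and h2: "h2 = h_AB A' B'" "length A' = length B'" "balanced (xor_str A' B')"
      unfolding H_OTP_def by blast
    show "h1 = h2"
    proof (cases "A = []")
      case True
      then have B: "B = []" using h1 by simp
      show ?thesis
      proof (cases "A' = []")
        case True
        then show ?thesis using h1 h2 B \<open>A = []\<close> by simp
      next
        case False
        have "(False, A') \<in> range h2" using range_ne[OF h2(2,3) False] h2(1) by simp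
        then have "(False, A') \<in> range h1" using eq by simp
        then show ?thesis using range_e h1(1) True B False by auto
      qed
    next
      case False
      note F = False
      show ?thesis
      proof (cases "A' = []")
        case True
        then have B: "B' = []" using h2 by simp
        have "(False, A) \<in> range h1" using range_ne[OF h1(2,3) F] h1(1) by simp
        then have "(False, A) \<in> range h2" using eq by simp
        then show ?thesis using range_e h2(1) True B F by auto
      next
        case False
        have "{(True, B), (False, A)} = {(True, B'), (False, A')}"
          using eq range_ne[OF h1(2,3) F] range_ne[OF h2(2,3) False] h1(1) h2(1) by simp
        then have "A = A' \<and> B = B'" by (auto simp: doubleton_eq_iff)
        then show ?thesis using h1 h2 by simp
      qed
    qed
  qed
qed

end
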